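(* Let $T=(T_1,\dots,T_m)$ be a commuting $m$-tuple of bounded operators on a Hilbert space $\mathcal H$. Then the joint approximate point spectrum $\sigma_{ap}(T)$ is disjoint from the open ball $\mathbb B_{m_\infty(T)}=\{\lambda\in\mathbb C^m:\|\lambda\|_2<m_\infty(T)\}$, where $$m_\infty(T)=\sup_{k\ge1}\ \inf_{h\in\mathcal H,\ \|h\|=1}\big\|Q_T^k(I)h\big\|^{1/(2k)},\qquad Q_T^k(I)=\sum_{|\alpha|=k}\frac{k!}{\alpha!}\,T^{*\alpha}T^\alpha.$$
   Context: For $\alpha\in\mathbb N^m$, $|\alpha|=\sum\alpha_i$, $\alpha!=\prod\alpha_i!$, $T^\alpha=T_1^{\alpha_1}\cdots T_m^{\alpha_m}$ and $T^{*\alpha}=(T^\alpha)^*$. The joint approximate point spectrum $\sigma_{ap}(T)$ is the set of $\lambda\in\mathbb C^m$ for which there are unit vectors $h_n$ with $\sum_j\|(T_j-\lambda_j)h_n\|\to0$. *)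

theory Defs
  imports "HOL-Analysis.Analysis"
begin

class chilbert = real_normed_vector + complete_space +
  fixes scaleC :: "complex \<Rightarrow> 'a \<Rightarrow> 'a" (infixr "*\<^sub>C" 75)
    and cinner :: "'a \<Rightarrow> 'a \<Rightarrow> complex"
  assumes scaleC_add_right: "a *\<^sub>C (x + y) = a *\<^sub>C x + a *\<^sub>C y"
    and scaleC_add_left: "(a + b) *\<^sub>C x = a *\<^sub>C x + b *\<^sub>C x"
    and scaleC_scaleC: "a *\<^sub>C (b *\<^sub>C x) = (a * b) *\<^sub>C x"
    and scaleC_one: "1 *\<^sub>C x = x"
    and scaleR_scaleC: "scaleR r x = complex_of_real r *\<^sub>C x"
    and cinner_conj: "cinner x y = cnj (cinner y x)"
    and cinner_add_right: "cinner x (y + z) = cinner x y + cinner x z"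
    and cinner_scaleC_right: "cinner x (a *\<^sub>C y) = a * cinner x y"
    and cinner_self_norm: "cinner x x = complex_of_real ((norm x)\<^sup>2)"

instantiation complex :: chilbert
begin
definition scaleC_complex :: "complex \<Rightarrow> complex \<Rightarrow> complex" where
  "scaleC_complex a x = a * x"
definition cinner_complex :: "complex \<Rightarrow> complex \<Rightarrow> complex" where
  "cinner_complex x y = cnj x * y"
instance
proof
  fix a b :: complex and x y z :: complex and r :: real
  show "a *\<^sub>C (x + y) = a *\<^sub>C x + a *\<^sub>C y"
    by (simp add: scaleC_complex_def distrib_left)
  show "(a + b) *\<^sub>C x = a *\<^sub>C x + b *\<^sub>C x"
    by (simp add: scaleC_complex_def distrib_right)
  show "a *\<^sub>C (b *\<^sub>C x) = (a * b) *\<^sub>C x"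
    by (simp add: scaleC_complex_def mult.assoc)
  show "1 *\<^sub>C x = x" by (simp add: scaleC_complex_def)
  show "scaleR r x = complex_of_real r *\<^sub>C x"
    by (simp add: scaleC_complex_def scaleR_conv_of_real)
  show "cinner x y = cnj (cinner y x)" by (simp add: cinner_complex_def mult.commute)
  show "cinner x (y + z) = cinner x y + cinner x z"
    by (simp add: cinner_complex_def distrib_left)
  show "cinner x (a *\<^sub>C y) = a * cinner x y"
    by (simp add: cinner_complex_def scaleC_complex_def mult.left_commute)
  show "cinner x x = complex_of_real ((norm x)\<^sup>2)"
    unfolding cinner_complex_def complex_norm_square by (rule mult.commute)
qed
end

definition bounded_clinear :: "('a::chilbert \<Rightarrow> 'a) \<Rightarrow> bool" where
  "bounded_clinear A \<longleftrightarrow> bounded_linear A \<and> (\<forall>c x. A (c *\<^sub>C x) = c *\<^sub>C A x)"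

definition cadjoint :: "('a::chilbert \<Rightarrow> 'a) \<Rightarrow> ('a \<Rightarrow> 'a)" where
  "cadjoint A = (THE B. \<forall>x y. cinner (B x) y = cinner x (A y))"

definition multi_indices :: "nat \<Rightarrow> nat \<Rightarrow> (nat \<Rightarrow> nat) set" where
  "multi_indices m k = {\<alpha>. (\<forall>i\<ge>m. \<alpha> i = 0) \<and> (\<Sum>i<m. \<alpha> i) = k}"

definition Tpow :: "nat \<Rightarrow> (nat \<Rightarrow> 'a \<Rightarrow> 'a) \<Rightarrow> (nat \<Rightarrow> nat) \<Rightarrow> 'a \<Rightarrow> 'a" where
  "Tpow m T \<alpha> = foldr (\<lambda>i f. (T i ^^ \<alpha> i) \<circ> f) [0..<m] id"

definition QTk :: "nat \<Rightarrow> (nat \<Rightarrow> 'a::chilbert \<Rightarrow> 'a) \<Rightarrow> nat \<Rightarrow> 'a \<Rightarrow> 'a" where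
  "QTk m T k h = (\<Sum>\<alpha>\<in>multi_indices m k.
      (fact k / (\<Prod>i<m. fact (\<alpha> i)) :: real) *\<^sub>R cadjoint (Tpow m T \<alpha>) (Tpow m T \<alpha> h))"

definition m_infty :: "nat \<Rightarrow> (nat \<Rightarrow> 'a::chilbert \<Rightarrow> 'a) \<Rightarrow> real" where
  "m_infty m T = (SUP k\<in>{1..}. INF h\<in>{h. norm h = 1}.
      norm (QTk m T k h) powr (1 / (2 * real k)))"

definition cvec :: "nat \<Rightarrow> (nat \<Rightarrow> complex) set" where
  "cvec m = {z. \<forall>i\<ge>m. z i = 0}"

definition l2norm :: "nat \<Rightarrow> (nat \<Rightarrow> complex) \<Rightarrow> real" where
  "l2norm m z = sqrt (\<Sum>i<m. (cmod (z i))\<^sup>2)"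

definition joint_ap_spectrum :: "nat \<Rightarrow> (nat \<Rightarrow> 'a::chilbert \<Rightarrow> 'a) \<Rightarrow> (nat \<Rightarrow> complex) set" where
  "joint_ap_spectrum m T = {z\<in>cvec m. \<exists>h :: nat \<Rightarrow> 'a. (\<forall>n. norm (h n) = 1) \<and>
      (\<lambda>n. \<Sum>j<m. norm (T j (h n) - z j *\<^sub>C h n)) \<longlonglongrightarrow> 0}"

end

theory Submission
  imports Defs
begin


lemma cinner_add_left: "cinner (x + y) z = cinner x z + cinner y (z::'a::chilbert)"
  by (metis cinner_add_right cinner_conj complex_cnj_add)

lemma cinner_scaleC_left: "cinner (a *\<^sub>C x) (y::'a::chilbert) = cnj a * cinner x y"
  by (metis cinner_conj cinner_scaleC_right complex_cnj_mult)

lemma cinner_scaleR_right: "cinner x (r *\<^sub>R (y::'a::chilbert)) = of_real r * cinner x y"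
  by (simp add: scaleR_scaleC cinner_scaleC_right)

lemma cinner_scaleR_left: "cinner (r *\<^sub>R x) (y::'a::chilbert) = of_real r * cinner x y"
  by (simp add: scaleR_scaleC cinner_scaleC_left)

lemma cinner_zero_right[simp]: "cinner x (0::'a::chilbert) = 0"
  using cinner_add_right[of x 0 0] by simp

lemma cinner_zero_left[simp]: "cinner (0::'a::chilbert) y = 0"
  using cinner_add_left[of 0 0 y] by simp

lemma cinner_minus_right: "cinner x (- y) = - cinner x (y::'a::chilbert)"
  using cinner_add_right[of x y "-y"] by (simp add: add_eq_0_iff2)

lemma cinner_minus_left: "cinner (- x) y = - cinner x (y::'a::chilbert)"
  using cinner_add_left[of x "-x" y] by (simp add: add_eq_0_iff2)

lemma cinner_diff_right: "cinner x (y - z) = cinner x y - cinner x (z::'a::chilbert)"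
  by (simp only: diff_conv_add_uminus cinner_add_right cinner_minus_right)

lemma cinner_diff_left: "cinner (x - y) z = cinner x z - cinner y (z::'a::chilbert)"
  by (simp only: diff_conv_add_uminus cinner_add_left cinner_minus_left)

lemma cinner_sum_right: "cinner x (sum f A) = (\<Sum>a\<in>A. cinner x (f a::'a::chilbert))"
  by (induct A rule: infinite_finite_induct) (auto simp: cinner_add_right)

lemma cinner_sum_left: "cinner (sum f A) y = (\<Sum>a\<in>A. cinner (f a::'a::chilbert) y)"
  by (induct A rule: infinite_finite_induct) (auto simp: cinner_add_left)

lemma Re_cinner_self: "Re (cinner x x) = (norm (x::'a::chilbert))\<^sup>2"
  by (simp add: cinner_self_norm)

lemma cinner_self_zero: "cinner x x = 0 \<longleftrightarrow> (x::'a::chilbert) = 0"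
  by (simp add: cinner_self_norm)

lemma cinner_eq0: "(\<And>y. cinner x y = 0) \<Longrightarrow> (x::'a::chilbert) = 0"
  using cinner_self_zero by blast

lemma scaleC_zero_right[simp]: "a *\<^sub>C (0::'a::chilbert) = 0"
  using scaleC_add_right[of a 0 0] by simp

lemma scaleC_zero_left[simp]: "0 *\<^sub>C (x::'a::chilbert) = 0"
  using scaleR_scaleC[of 0 x] by simp

lemma scaleC_minus_right: "a *\<^sub>C (- x) = - (a *\<^sub>C (x::'a::chilbert))"
  using scaleC_add_right[of a x "-x"] by (simp add: add_eq_0_iff2)

lemma scaleC_diff_right: "a *\<^sub>C (x - y) = a *\<^sub>C x - a *\<^sub>C (y::'a::chilbert)"
  by (simp only: diff_conv_add_uminus scaleC_add_right scaleC_minus_right)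

lemma scaleC_minus_left: "(- a) *\<^sub>C x = - (a *\<^sub>C (x::'a::chilbert))"
  using scaleC_add_left[of a "-a" x] by (simp add: add_eq_0_iff2)

lemma scaleC_diff_left: "(a - b) *\<^sub>C x = a *\<^sub>C x - b *\<^sub>C (x::'a::chilbert)"
  by (simp only: diff_conv_add_uminus scaleC_add_left scaleC_minus_left)

lemma norm_scaleC: "norm (a *\<^sub>C x) = cmod a * norm (x::'a::chilbert)"
proof -
  have "complex_of_real ((norm (a *\<^sub>C x))\<^sup>2) = complex_of_real ((cmod a * norm x)\<^sup>2)"
    unfolding cinner_self_norm[symmetric] cinner_scaleC_left cinner_scaleC_right
    by (simp add: cinner_self_norm power_mult_distrib complex_norm_square[symmetric] mult_ac)
  hence "(norm (a *\<^sub>C x))\<^sup>2 = (cmod a * norm x)\<^sup>2" using of_real_eq_iff by blast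
  thus ?thesis by (simp add: power2_eq_iff_nonneg)
qed

lemma norm_add_sq: "(norm (x + y))\<^sup>2 = (norm x)\<^sup>2 + (norm y)\<^sup>2 + 2 * Re (cinner x (y::'a::chilbert))"
proof -
  have "(norm (x + y))\<^sup>2 = Re (cinner (x+y) (x+y))" by (simp add: Re_cinner_self)
  also have "\<dots> = Re (cinner x x) + Re (cinner y y) + Re (cinner x y) + Re (cinner y x)"
    by (simp add: cinner_add_left cinner_add_right)
  also have "Re (cinner y x) = Re (cinner x y)" by (subst cinner_conj) simp
  finally show ?thesis by (simp add: Re_cinner_self)
qed

lemma norm_diff_sq: "(norm (x - y))\<^sup>2 = (norm x)\<^sup>2 + (norm y)\<^sup>2 - 2 * Re (cinner x (y::'a::chilbert))"
  using norm_add_sq[of x "-y"] by (simp add: cinner_minus_right)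

lemma parallelogram: "(norm (x + y))\<^sup>2 + (norm (x - y))\<^sup>2 = 2 * (norm x)\<^sup>2 + 2 * (norm (y::'a::chilbert))\<^sup>2"
  by (simp add: norm_add_sq norm_diff_sq)

lemma Re_cinner_le: "Re (cinner x y) \<le> norm x * norm (y::'a::chilbert)"
proof -
  define a where "a = norm x"
  define b where "b = norm y"
  have "0 \<le> (norm (b *\<^sub>R x - a *\<^sub>R y))\<^sup>2" by simp
  also have "\<dots> = 2 * (a*b)\<^sup>2 - 2 * (a * b) * Re (cinner x y)"
    unfolding norm_diff_sq by (simp add: cinner_scaleR_left cinner_scaleR_right a_def b_def power2_eq_square)
  finally have *: "(a * b) * Re (cinner x y) \<le> (a*b) * (a*b)" by (simp add: power2_eq_square)
  show ?thesis
  proof (cases "a * b = 0")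
    case True
    hence "x = 0 \<or> y = 0" by (auto simp: a_def b_def)
    thus ?thesis by auto
  next
    case False
    hence "a * b > 0" by (simp add: a_def b_def)
    with * have "Re (cinner x y) \<le> a * b" by (simp add: mult_le_cancel_left_pos)
    thus ?thesis by (simp add: a_def b_def)
  qed
qed


lemma bl_add: "bounded_linear f \<Longrightarrow> f (x + y) = f x + f y" by (simp add: bounded_linear.linear linear_add)
lemma bl_diff: "bounded_linear f \<Longrightarrow> f (x - y) = f x - f y" by (simp add: bounded_linear.linear linear_diff)
lemma bl_scaleR: "bounded_linear f \<Longrightarrow> f (r *\<^sub>R x) = r *\<^sub>R f x" by (simp add: bounded_linear.linear linear_scale)
lemma bl_zero: "bounded_linear f \<Longrightarrow> f 0 = 0" by (simp add: bounded_linear.linear linear_0)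
lemma bl_sum: "bounded_linear f \<Longrightarrow> f (sum g A) = (\<Sum>a\<in>A. f (g a))" by (simp add: bounded_linear.linear linear_sum)
lemma "bounded_linear f \<Longrightarrow> X \<longlonglongrightarrow> x \<Longrightarrow> (\<lambda>n. f (X n)) \<longlonglongrightarrow> f x" by (rule bounded_linear.tendsto)


lemma riesz:
  fixes \<phi> :: "'a::chilbert \<Rightarrow> complex"
  assumes bl: "bounded_linear \<phi>" and cl: "\<And>c x. \<phi> (c *\<^sub>C x) = c * \<phi> x"
  shows "\<exists>w. \<forall>y. cinner w y = \<phi> y"
proof (cases "\<forall>x. \<phi> x = 0")
  case True then show ?thesis by (intro exI[of _ 0]) auto
next
  case False
  then obtain x0 where x0: "\<phi> x0 \<noteq> 0" by auto
  define A where "A = {y. \<phi> y = 1}"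
  have y0: "(1 / \<phi> x0) *\<^sub>C x0 \<in> A" using x0 by (simp add: A_def cl)
  define d where "d = Inf (norm ` A)"
  have bdd: "bdd_below (norm ` A)" by (rule bdd_belowI[of _ 0]) auto
  have dle: "\<And>y. y \<in> A \<Longrightarrow> d \<le> norm y" unfolding d_def by (rule cInf_lower) (use bdd in auto)
  have d0: "0 \<le> d" using dle[OF y0] norm_ge_zero order_trans
    unfolding d_def by (metis (no_types, lifting) A_def bdd cInf_greatest empty_iff image_iff norm_ge_zero y0)
  have mid: "(norm (y - y'))\<^sup>2 \<le> 2 * (norm y)\<^sup>2 + 2 * (norm y')\<^sup>2 - 4 * d\<^sup>2" if "y \<in> A" "y' \<in> A" for y y'
  proof -
    have "(1/2::real) *\<^sub>R (y + y') \<in> A" using that bl by (simp add: A_def bl_scaleR bl_add scaleR_conv_of_real)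
    hence "d \<le> norm ((1/2::real) *\<^sub>R (y + y'))" by (rule dle)
    hence "d \<le> norm (y + y') / 2" by simp
    hence "2 * d \<le> norm (y + y')" by simp
    hence "(2 * d)\<^sup>2 \<le> (norm (y + y'))\<^sup>2" using d0 by (intro power_mono) auto
    thus ?thesis using parallelogram[of y y'] by (simp add: power_mult_distrib)
  qed
  have "\<exists>y\<in>A. (norm y)\<^sup>2 < d\<^sup>2 + 1 / real (Suc n)" for n
  proof -
    have "d < sqrt (d\<^sup>2 + 1 / real (Suc n))" using d0
      by (metis add.right_neutral add_strict_left_mono of_nat_0_less_iff real_sqrt_abs real_sqrt_less_mono zero_less_Suc zero_less_divide_1_iff abs_of_nonneg)
    hence "Inf (norm ` A) < sqrt (d\<^sup>2 + 1 / real (Suc n))" by (simp add: d_def)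
    then obtain y where y: "y \<in> A" "norm y < sqrt (d\<^sup>2 + 1 / real (Suc n))"
      using cInf_less_iff[of "norm ` A"] bdd y0 by auto
    have "(norm y)\<^sup>2 < (sqrt (d\<^sup>2 + 1 / real (Suc n)))\<^sup>2"
      using y(2) by (intro power_strict_mono) auto
    also have "\<dots> = d\<^sup>2 + 1 / real (Suc n)" by (intro real_sqrt_pow2) (simp add: add_nonneg_nonneg)
    finally show ?thesis using y(1) by blast
  qed
  then obtain Y where YA: "\<And>n. Y n \<in> A" and Yn: "\<And>n. (norm (Y n))\<^sup>2 < d\<^sup>2 + 1 / real (Suc n)"
    by metis
  have "Cauchy Y"
  proof (rule metric_CauchyI)
    fix e :: real assume e: "e > 0"
    obtain N :: nat where N: "4 / (e\<^sup>2) < real N" using reals_Archimedean2 by blast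
    have "1 / real (Suc N) < e\<^sup>2 / 4"
    proof -
      have "4 / e\<^sup>2 < real (Suc N)" using N by simp
      thus ?thesis using e by (simp add: field_simps)
    qed
    show "\<exists>M. \<forall>m\<ge>M. \<forall>n\<ge>M. dist (Y m) (Y n) < e"
    proof (intro exI allI impI)
      fix m n assume mn: "N \<le> m" "N \<le> n"
      have im: "1 / real (Suc m) \<le> 1 / real (Suc N)" using mn by (simp add: frac_le)
      have inn: "1 / real (Suc n) \<le> 1 / real (Suc N)" using mn by (simp add: frac_le)
      have "(norm (Y m - Y n))\<^sup>2 \<le> 2 * (norm (Y m))\<^sup>2 + 2 * (norm (Y n))\<^sup>2 - 4 * d\<^sup>2"
        by (rule mid[OF YA YA])
      also have "\<dots> < 2 / real (Suc m) + 2 / real (Suc n)" using Yn[of m] Yn[of n] by simp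
      also have "\<dots> \<le> 4 / real (Suc N)" using im inn by simp
      also have "\<dots> < e\<^sup>2" using \<open>1 / real (Suc N) < e\<^sup>2 / 4\<close> by simp
      finally have "(norm (Y m - Y n))\<^sup>2 < e\<^sup>2" .
      hence "norm (Y m - Y n) < e" using e by (simp add: power_less_imp_less_base)
      thus "dist (Y m) (Y n) < e" by (simp add: dist_norm)
    qed
  qed
  then obtain z where Yz: "Y \<longlonglongrightarrow> z" using convergent_def complete_UNIV convergent_eq_Cauchy by blast
  have "(\<lambda>n. \<phi> (Y n)) \<longlonglongrightarrow> \<phi> z" using bl Yz by (rule bounded_linear.tendsto)
  moreover have "(\<lambda>n. \<phi> (Y n)) = (\<lambda>n. 1)" using YA by (simp add: A_def)
  ultimately have zA: "\<phi> z = 1" using LIMSEQ_unique tendsto_const by metis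
  have "(\<lambda>n. (norm (Y n))\<^sup>2) \<longlonglongrightarrow> (norm z)\<^sup>2" by (intro tendsto_intros Yz)
  moreover have "(\<lambda>n. d\<^sup>2 + 1 / real (Suc n)) \<longlonglongrightarrow> d\<^sup>2 + 0"
    by (intro tendsto_intros LIMSEQ_inverse_real_of_nat[unfolded inverse_eq_divide])
  moreover have "\<exists>N. \<forall>n\<ge>N. (norm (Y n))\<^sup>2 \<le> d\<^sup>2 + 1 / real (Suc n)"
    using Yn less_imp_le by blast
  ultimately have "(norm z)\<^sup>2 \<le> d\<^sup>2 + 0"
    by (rule LIMSEQ_le)
  hence "norm z \<le> d" using power2_le_imp_le[of "norm z" d] d0 by simp
  hence zmin: "\<And>y. y \<in> A \<Longrightarrow> norm z \<le> norm y" using dle by (meson order_trans)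
  have orth: "cinner z k = 0" if k: "\<phi> k = 0" for k
  proof -
    define w where "w = cinner z k"
    define s where "s = 1 / ((norm k)\<^sup>2 + 1)"
    have s0: "s > 0" unfolding s_def by (intro divide_pos_pos) (auto intro: add_nonneg_pos)
    have p: "0 < (norm k)\<^sup>2 + 1" by (metis add_nonneg_pos zero_le_power2 zero_less_one)
    have sk: "s * (norm k)\<^sup>2 < 1" unfolding s_def using p by (simp add: pos_divide_less_eq)
    define t where "t = - (of_real s * cnj w)"
    have "z + t *\<^sub>C k \<in> A" using zA k bl by (simp add: A_def bl_add cl)
    hence "(norm z)\<^sup>2 \<le> (norm (z + t *\<^sub>C k))\<^sup>2" using zmin by (simp add: power_mono)
    also have "\<dots> = (norm z)\<^sup>2 + (cmod t * norm k)\<^sup>2 + 2 * Re (t * w)"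
      by (simp add: norm_add_sq norm_scaleC cinner_scaleC_right w_def)
    also have "Re (t * w) = - s * (cmod w)\<^sup>2"
      proof -
        have "(cmod w)\<^sup>2 = Re w * Re w + Im w * Im w" using cmod_power2[of w] by (simp only: power2_eq_square)
        thus ?thesis by (simp add: t_def algebra_simps)
      qed
    also have "cmod t = s * cmod w" using s0 by (simp add: t_def norm_mult)
    finally have "0 \<le> s * (s * (norm k)\<^sup>2 * (cmod w)\<^sup>2 - 2 * (cmod w)\<^sup>2)"
      by (simp add: power_mult_distrib algebra_simps power2_eq_square)
    hence "0 \<le> s * (norm k)\<^sup>2 * (cmod w)\<^sup>2 - 2 * (cmod w)\<^sup>2" using s0 by (simp add: zero_le_mult_iff)
    moreover have "s * (norm k)\<^sup>2 * (cmod w)\<^sup>2 \<le> (cmod w)\<^sup>2" using sk s0 by (intro mult_left_le_one_le) auto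
    ultimately have "(cmod w)\<^sup>2 \<le> 0" by linarith
    thus ?thesis by (simp add: w_def)
  qed
  have z0: "z \<noteq> 0" using zA bl by (auto simp: bl_zero)
  define w where "w = (1 / (norm z)\<^sup>2) *\<^sub>R z"
  have "cinner w y = \<phi> y" for y
  proof -
    have "\<phi> (y - \<phi> y *\<^sub>C z) = 0" using bl zA by (simp add: bl_diff cl)
    hence "cinner z (y - \<phi> y *\<^sub>C z) = 0" by (rule orth)
    hence "cinner z y = \<phi> y * of_real ((norm z)\<^sup>2)"
      by (simp add: cinner_diff_right cinner_scaleC_right cinner_self_norm)
    thus ?thesis using z0 by (simp add: w_def cinner_scaleR_left)
  qed
  thus ?thesis by blast
qed



lemma cinner_norm_le: "cmod (cinner x y) \<le> norm x * norm (y::'a::chilbert)"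
proof (cases "cinner x y = 0")
  case True thus ?thesis by simp
next
  case False
  define u where "u = cinner x y"
  define c where "c = cnj u / of_real (cmod u)"
  have cu: "c * u = of_real (cmod u)" using False
    by (simp add: c_def u_def complex_norm_square[symmetric] power2_eq_square mult.commute[of "cnj _"])
  have c1: "cmod c = 1" using False by (simp add: c_def u_def norm_divide)
  have "cmod u = Re (cinner x (c *\<^sub>C y))" by (simp add: cinner_scaleC_right cu[unfolded u_def] u_def)
  also have "\<dots> \<le> norm x * norm (c *\<^sub>C y)" by (rule Re_cinner_le)
  also have "\<dots> = norm x * norm y" by (simp add: norm_scaleC c1)
  finally show ?thesis by (simp add: u_def)
qed

lemma bounded_linear_cinner_op:
  fixes A :: "'a::chilbert \<Rightarrow> 'a"
  assumes bl: "bounded_linear A"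
  shows "bounded_linear (\<lambda>y. cinner x (A y))"
proof -
  obtain K where K: "\<And>y. norm (A y) \<le> norm y * K" using bounded_linear.bounded[OF bl] by blast
  show ?thesis
  proof (rule bounded_linear_intro[where K = "norm x * K"])
    fix y z show "cinner x (A (y + z)) = cinner x (A y) + cinner x (A z)"
      using bl by (simp add: bl_add cinner_add_right)
  next
    fix r y show "cinner x (A (r *\<^sub>R y)) = r *\<^sub>R cinner x (A y)"
      using bl by (simp add: bl_scaleR cinner_scaleR_right scaleR_conv_of_real)
  next
    fix y
    have "norm (cinner x (A y)) \<le> norm x * norm (A y)" by (rule cinner_norm_le)
    also have "\<dots> \<le> norm x * (norm y * K)" using K by (simp add: mult_left_mono)
    finally show "norm (cinner x (A y)) \<le> norm y * (norm x * K)" by (simp add: mult_ac)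
  qed
qed

lemma adjoint_exists:
  fixes A :: "'a::chilbert \<Rightarrow> 'a"
  assumes bl: "bounded_linear A" and cl: "\<And>c x. A (c *\<^sub>C x) = c *\<^sub>C A x"
  shows "\<exists>B. \<forall>x y. cinner (B x) y = cinner x (A y)"
proof -
  have "\<forall>x. \<exists>w. \<forall>y. cinner w y = cinner x (A y)"
  proof
    fix x show "\<exists>w. \<forall>y. cinner w y = cinner x (A y)"
      by (rule riesz[OF bounded_linear_cinner_op[OF bl]]) (simp add: cl cinner_scaleC_right)
  qed
  thus ?thesis by metis
qed

lemma cadjoint_prop:
  fixes A :: "'a::chilbert \<Rightarrow> 'a"
  assumes bl: "bounded_linear A" and cl: "\<And>c x. A (c *\<^sub>C x) = c *\<^sub>C A x"
  shows "cinner (cadjoint A x) y = cinner x (A y)"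
proof -
  obtain B where B: "\<forall>x y. cinner (B x) y = cinner x (A y)" using adjoint_exists[OF bl cl] by blast
  have "cadjoint A = B"
    unfolding cadjoint_def
  proof (rule the_equality)
    show "\<forall>x y. cinner (B x) y = cinner x (A y)" by (rule B)
  next
    fix B' assume B': "\<forall>x y. cinner (B' x) y = cinner x (A y)"
    show "B' = B"
    proof
      fix x
      have "B' x - B x = 0" by (rule cinner_eq0) (simp add: cinner_diff_left B B')
      thus "B' x = B x" by simp
    qed
  qed
  thus ?thesis using B by simp
qed

lemma cadjoint_bounded:
  fixes A :: "'a::chilbert \<Rightarrow> 'a"
  assumes bl: "bounded_linear A" and cl: "\<And>c x. A (c *\<^sub>C x) = c *\<^sub>C A x"
  shows "bounded_linear (cadjoint A)"
proof -
  note P = cadjoint_prop[OF bl cl]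
  obtain K where K: "\<And>y. norm (A y) \<le> norm y * K" and K0: "K > 0"
    using bounded_linear.pos_bounded[OF bl] by blast
  show ?thesis
  proof (rule bounded_linear_intro[where K = K])
    fix x z
    have "cadjoint A (x + z) - (cadjoint A x + cadjoint A z) = 0"
      by (rule cinner_eq0) (simp add: cinner_diff_left cinner_add_left P)
    thus "cadjoint A (x + z) = cadjoint A x + cadjoint A z" by simp
  next
    fix r x
    have "cadjoint A (r *\<^sub>R x) - r *\<^sub>R cadjoint A x = 0"
      by (rule cinner_eq0) (simp add: cinner_diff_left cinner_scaleR_left P)
    thus "cadjoint A (r *\<^sub>R x) = r *\<^sub>R cadjoint A x" by simp
  next
    fix x
    define b where "b = cadjoint A x"
    have "(norm b)\<^sup>2 = Re (cinner x (A b))" using P[of x b] by (simp add: b_def Re_cinner_self[symmetric])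
    also have "\<dots> \<le> norm x * norm (A b)" by (rule Re_cinner_le)
    also have "\<dots> \<le> norm x * (norm b * K)" using K by (simp add: mult_left_mono)
    finally have "norm b * norm b \<le> norm b * (norm x * K)" by (simp add: power2_eq_square mult_ac)
    hence "norm b \<le> norm x * K" using K0
      by (cases "norm b = 0") (auto simp: mult_le_cancel_left_pos)
    thus "norm (cadjoint A x) \<le> norm x * K" by (simp add: b_def)
  qed
qed



definition good :: "(nat \<Rightarrow> 'a::chilbert) \<Rightarrow> ('a \<Rightarrow> 'a) \<Rightarrow> complex \<Rightarrow> bool" where
  "good hs F \<mu> \<longleftrightarrow> bounded_linear F \<and> (\<forall>c x. F (c *\<^sub>C x) = c *\<^sub>C F x)
     \<and> (\<lambda>n. F (hs n) - \<mu> *\<^sub>C hs n) \<longlonglongrightarrow> 0"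

lemma good_id: "good hs id 1"
  by (simp add: good_def scaleC_one id_def)

lemma good_id'[simp]: "good hs (\<lambda>x. x) 1"
  using good_id[of hs] by (simp add: id_def)

lemma good_comp:
  assumes A: "good hs A a" and B: "good hs B b"
  shows "good hs (A \<circ> B) (a * b)"
proof -
  have blA: "bounded_linear A" and clA: "\<And>c x. A (c *\<^sub>C x) = c *\<^sub>C A x"
    and tA: "(\<lambda>n. A (hs n) - a *\<^sub>C hs n) \<longlonglongrightarrow> 0" using A by (auto simp: good_def)
  have blB: "bounded_linear B" and clB: "\<And>c x. B (c *\<^sub>C x) = c *\<^sub>C B x"
    and tB: "(\<lambda>n. B (hs n) - b *\<^sub>C hs n) \<longlonglongrightarrow> 0" using B by (auto simp: good_def)
  obtain K where K: "\<And>y. norm (A y) \<le> norm y * K" using bounded_linear.bounded[OF blA] by blast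
  have eq: "A (B (hs n)) - (a * b) *\<^sub>C hs n
      = A (B (hs n) - b *\<^sub>C hs n) + b *\<^sub>C (A (hs n) - a *\<^sub>C hs n)" for n
    using blA by (simp add: bl_diff clA scaleC_diff_right scaleC_scaleC mult.commute)
  have "(\<lambda>n. norm (B (hs n) - b *\<^sub>C hs n) * K + cmod b * norm (A (hs n) - a *\<^sub>C hs n)) \<longlonglongrightarrow> 0 * K + cmod b * 0"
    using tA tB by (intro tendsto_intros) (auto simp: tendsto_norm_zero_iff)
  hence lim: "(\<lambda>n. norm (B (hs n) - b *\<^sub>C hs n) * K + cmod b * norm (A (hs n) - a *\<^sub>C hs n)) \<longlonglongrightarrow> 0"
    by simp
  have "(\<lambda>n. A (B (hs n)) - (a * b) *\<^sub>C hs n) \<longlonglongrightarrow> 0"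
  proof (rule Lim_null_comparison[OF _ lim], rule always_eventually, rule allI)
    fix n
    have "norm (A (B (hs n)) - (a * b) *\<^sub>C hs n)
        \<le> norm (A (B (hs n) - b *\<^sub>C hs n)) + norm (b *\<^sub>C (A (hs n) - a *\<^sub>C hs n))"
      unfolding eq by (rule norm_triangle_ineq)
    also have "\<dots> \<le> norm (B (hs n) - b *\<^sub>C hs n) * K + cmod b * norm (A (hs n) - a *\<^sub>C hs n)"
      using K by (intro add_mono) (auto simp: norm_scaleC)
    finally show "norm (A (B (hs n)) - (a * b) *\<^sub>C hs n)
        \<le> norm (B (hs n) - b *\<^sub>C hs n) * K + cmod b * norm (A (hs n) - a *\<^sub>C hs n)" .
  qed
  moreover have "bounded_linear (A \<circ> B)" using blA blB by (simp add: bounded_linear_compose comp_def)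
  ultimately show ?thesis using clA clB by (simp add: good_def)
qed

lemma good_pow: "good hs A a \<Longrightarrow> good hs (A ^^ j) (a ^ j)"
proof (induction j)
  case 0 thus ?case using good_id[of hs] by (simp add: id_def)
next
  case (Suc j)
  hence "good hs (A \<circ> (A ^^ j)) (a * a ^ j)" by (intro good_comp) auto
  thus ?case by (simp add: comp_def id_def)
qed

lemma good_foldr:
  assumes "\<And>i. i \<in> set is \<Longrightarrow> good hs (T i) (lam i)"
  shows "good hs (foldr (\<lambda>i f. (T i ^^ \<alpha> i) \<circ> f) is id) (foldr (\<lambda>i p. lam i ^ \<alpha> i * p) is 1)"
  using assms
proof (induction "is")
  case Nil thus ?case by simp
next
  case (Cons i "is")
  have "good hs ((T i ^^ \<alpha> i) \<circ> foldr (\<lambda>i f. (T i ^^ \<alpha> i) \<circ> f) is id)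
     (lam i ^ \<alpha> i * foldr (\<lambda>i p. lam i ^ \<alpha> i * p) is 1)"
  proof (rule good_comp)
    show "good hs (T i ^^ \<alpha> i) (lam i ^ \<alpha> i)" by (rule good_pow) (use Cons.prems in simp)
    show "good hs (foldr (\<lambda>i f. (T i ^^ \<alpha> i) \<circ> f) is id) (foldr (\<lambda>i p. lam i ^ \<alpha> i * p) is 1)"
      by (rule Cons.IH) (use Cons.prems in simp)
  qed
  thus ?case by (simp add: comp_def id_def)
qed

lemma foldr_prod: "foldr (\<lambda>i p. g i * p) xs (a::'b::comm_monoid_mult) = prod_list (map g xs) * a"
  by (induction xs) (auto simp: mult.assoc)

lemma prod_list_upt: "prod_list (map g [0..<m]) = (\<Prod>i<m. (g i :: 'b::comm_monoid_mult))"
  by (induction m) (auto simp: mult.commute)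

lemma good_Tpow:
  assumes "\<And>i. i < m \<Longrightarrow> good hs (T i) (lam i)"
  shows "good hs (Tpow m T \<alpha>) (\<Prod>i<m. lam i ^ \<alpha> i)"
  using good_foldr[of "[0..<m]" hs T lam \<alpha>] assms
  by (simp add: Tpow_def foldr_prod prod_list_upt)



lemma finite_multi_indices: "finite (multi_indices m k)"
proof -
  have inj: "inj_on (\<lambda>\<alpha>. map \<alpha> [0..<m]) (multi_indices m k)"
  proof (rule inj_onI)
    fix \<alpha> \<beta> assume a: "\<alpha> \<in> multi_indices m k" and b: "\<beta> \<in> multi_indices m k"
      and eq: "map \<alpha> [0..<m] = map \<beta> [0..<m]"
    show "\<alpha> = \<beta>"
    proof
      fix i show "\<alpha> i = \<beta> i"
      proof (cases "i < m")
        case True thus ?thesis using eq by (metis map_eq_conv atLeastLessThan_iff set_upt zero_le)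
      next
        case False thus ?thesis using a b by (simp add: multi_indices_def)
      qed
    qed
  qed
  have sub: "(\<lambda>\<alpha>. map \<alpha> [0..<m]) ` multi_indices m k \<subseteq> {xs. set xs \<subseteq> {..k} \<and> length xs = m}"
  proof clarsimp
    fix \<alpha> i assume a: "\<alpha> \<in> multi_indices m k" and i: "i < m"
    have "\<alpha> i \<le> (\<Sum>i<m. \<alpha> i)" using i by (intro member_le_sum) auto
    thus "\<alpha> i \<le> k" using a by (simp add: multi_indices_def)
  qed
  have "finite {xs. set xs \<subseteq> {..k} \<and> length xs = m}" by (rule finite_lists_length_eq) simp
  hence "finite ((\<lambda>\<alpha>. map \<alpha> [0..<m]) ` multi_indices m k)" using sub finite_subset by blast
  thus ?thesis using inj finite_imageD by blast
qed

lemma multi_indices_0: "multi_indices 0 k = (if k = 0 then {\<lambda>_. 0} else {})"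
  by (auto simp: multi_indices_def)

lemma multinomial:
  "(\<Sum>\<alpha>\<in>multi_indices m k. (fact k / (\<Prod>i<m. fact (\<alpha> i))) * (\<Prod>i<m. x i ^ \<alpha> i))
     = (\<Sum>i<m. x i :: real) ^ k"
proof (induction m arbitrary: k)
  case 0 thus ?case by (simp add: multi_indices_0)
next
  case (Suc m)
  define S where "S = (\<Sum>i<m. x i)"
  define c where "c = (\<lambda>k (\<beta>::nat\<Rightarrow>nat). (fact k / (\<Prod>i<m. fact (\<beta> i))) * (\<Prod>i<m. x i ^ \<beta> i) :: real)"
  have "(\<Sum>i<Suc m. x i) ^ k = (x m + S) ^ k" by (simp add: S_def add.commute)
  also have "\<dots> = (\<Sum>j\<le>k. of_nat (k choose j) * x m ^ j * S ^ (k - j))" by (rule binomial_ring)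
  also have "\<dots> = (\<Sum>j\<le>k. \<Sum>\<beta>\<in>multi_indices m (k - j). of_nat (k choose j) * x m ^ j * c (k - j) \<beta>)"
    by (simp add: Suc.IH[symmetric] S_def c_def sum_distrib_left)
  also have "\<dots> = (\<Sum>p\<in>Sigma {..k} (\<lambda>j. multi_indices m (k - j)). of_nat (k choose fst p) * x m ^ fst p * c (k - fst p) (snd p))"
    by (subst sum.Sigma) (auto simp: finite_multi_indices case_prod_beta)
  also have "\<dots> = (\<Sum>\<alpha>\<in>multi_indices (Suc m) k. (fact k / (\<Prod>i<Suc m. fact (\<alpha> i))) * (\<Prod>i<Suc m. x i ^ \<alpha> i))"
  proof (rule sum.reindex_bij_witness[where j = "\<lambda>p. (snd p)(m := fst p)" and i = "\<lambda>\<alpha>. (\<alpha> m, \<alpha>(m := 0))"])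
    fix \<alpha> assume a: "\<alpha> \<in> multi_indices (Suc m) k"
    show "(snd (\<alpha> m, \<alpha>(m := 0)))(m := fst (\<alpha> m, \<alpha>(m := 0))) = \<alpha>" by simp
    have s: "(\<Sum>i<m. \<alpha> i) + \<alpha> m = k" using a by (simp add: multi_indices_def)
    have s': "(\<Sum>i<m. (\<alpha>(m := 0)) i) = (\<Sum>i<m. \<alpha> i)" by (rule sum.cong) auto
    show "(\<alpha> m, \<alpha>(m := 0)) \<in> Sigma {..k} (\<lambda>j. multi_indices m (k - j))"
      using a s s' by (auto simp: multi_indices_def)
  next
    fix p assume p: "p \<in> Sigma {..k} (\<lambda>j. multi_indices m (k - j))"
    then obtain j \<beta> where pj: "p = (j, \<beta>)" and j: "j \<le> k" and b: "\<beta> \<in> multi_indices m (k - j)" by auto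
    have bm: "\<beta> m = 0" using b by (simp add: multi_indices_def)
    show "(((snd p)(m := fst p)) m, ((snd p)(m := fst p))(m := 0)) = p"
      using bm pj by (auto simp: fun_eq_iff)
    have s': "(\<Sum>i<m. (\<beta>(m := j)) i) = (\<Sum>i<m. \<beta> i)" by (rule sum.cong) auto
    show "(snd p)(m := fst p) \<in> multi_indices (Suc m) k"
      using b j s' by (auto simp: multi_indices_def pj)
    have p1: "(\<Prod>i<m. fact ((\<beta>(m := j)) i) :: real) = (\<Prod>i<m. fact (\<beta> i))" by (rule prod.cong) auto
    have p2: "(\<Prod>i<m. x i ^ (\<beta>(m := j)) i) = (\<Prod>i<m. x i ^ \<beta> i)" by (rule prod.cong) auto
    have pos: "(\<Prod>i<m. fact (\<beta> i) :: real) > 0" by (intro prod_pos) auto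
    have bin: "(of_nat (k choose j) :: real) = fact k / (fact j * fact (k - j))" using j by (rule binomial_fact)
    show "fact k / (\<Prod>i<Suc m. fact (((snd p)(m := fst p)) i)) * (\<Prod>i<Suc m. x i ^ ((snd p)(m := fst p)) i)
        = of_nat (k choose fst p) * x m ^ fst p * c (k - fst p) (snd p)"
      using pos unfolding pj c_def by (simp add: p1 p2 bin field_simps)
  qed
  finally show ?case ..
qed



lemma key:
  fixes T :: "nat \<Rightarrow> 'a::chilbert \<Rightarrow> 'a" and hs :: "nat \<Rightarrow> 'a" and z :: "nat \<Rightarrow> complex"
  assumes good: "\<And>i. i < m \<Longrightarrow> good hs (T i) (z i)" and unit: "\<And>n. norm (hs n) = 1"
    and k: "k \<ge> 1"
  shows "(INF h\<in>{h. norm h = 1}. norm (QTk m T k h) powr (1 / (2 * real k))) \<le> l2norm m z"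
proof -
  define MI where "MI = multi_indices m k"
  define A where "A = (\<lambda>\<alpha>. Tpow m T \<alpha>)"
  define c where "c = (\<lambda>\<alpha>. fact k / (\<Prod>i<m. fact (\<alpha> i)) :: real)"
  define Q where "Q = QTk m T k"
  define \<mu> where "\<mu> = (\<lambda>\<alpha>. \<Prod>i<m. z i ^ \<alpha> i)"
  have gA: "good hs (A \<alpha>) (\<mu> \<alpha>)" for \<alpha> unfolding A_def \<mu>_def by (rule good_Tpow) (rule good)
  have blA: "bounded_linear (A \<alpha>)" and clA: "\<And>c x. A \<alpha> (c *\<^sub>C x) = c *\<^sub>C A \<alpha> x"
    and tA: "(\<lambda>n. A \<alpha> (hs n) - \<mu> \<alpha> *\<^sub>C hs n) \<longlonglongrightarrow> 0" for \<alpha>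
    using gA[of \<alpha>] by (auto simp: good_def)
  note adj = cadjoint_prop[OF blA clA]
  have Qdef: "Q h = (\<Sum>\<alpha>\<in>MI. c \<alpha> *\<^sub>R cadjoint (A \<alpha>) (A \<alpha> h))" for h
    by (simp add: Q_def QTk_def MI_def A_def c_def)
  have blQ: "bounded_linear Q"
  proof -
    have "bounded_linear (\<lambda>h. \<Sum>\<alpha>\<in>MI. c \<alpha> *\<^sub>R cadjoint (A \<alpha>) (A \<alpha> h))"
    proof (rule bounded_linear_sum)
      fix \<alpha>
      have "bounded_linear (cadjoint (A \<alpha>) \<circ> A \<alpha>)"
        by (rule bounded_linear_compose[unfolded comp_def[symmetric]])
           (rule cadjoint_bounded[OF blA clA], rule blA)
      hence "bounded_linear (\<lambda>h. cadjoint (A \<alpha>) (A \<alpha> h))" by (simp add: comp_def)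
      thus "bounded_linear (\<lambda>h. c \<alpha> *\<^sub>R cadjoint (A \<alpha>) (A \<alpha> h))"
        using bounded_linear_compose[OF bounded_linear_scaleR_right] by blast
    qed
    moreover have "Q = (\<lambda>h. \<Sum>\<alpha>\<in>MI. c \<alpha> *\<^sub>R cadjoint (A \<alpha>) (A \<alpha> h))" by (rule ext) (rule Qdef)
    ultimately show ?thesis by simp
  qed
  have QQ: "cinner h (Q g) = (\<Sum>\<alpha>\<in>MI. of_real (c \<alpha>) * cinner (A \<alpha> h) (A \<alpha> g))" for h g
  proof -
    have "cinner h (cadjoint (A \<alpha>) (A \<alpha> g)) = cinner (A \<alpha> h) (A \<alpha> g)" for \<alpha>
      by (subst cinner_conj) (simp add: adj, subst cinner_conj, simp)
    thus ?thesis by (simp add: Qdef cinner_sum_right cinner_scaleR_right)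
  qed
  have QQ': "cinner (Q h) g = (\<Sum>\<alpha>\<in>MI. of_real (c \<alpha>) * cinner (A \<alpha> h) (A \<alpha> g))" for h g
    by (simp add: Qdef cinner_sum_left cinner_scaleR_left adj)
  have sa: "cinner h (Q g) = cinner (Q h) g" for h g by (simp add: QQ QQ')
  define q where "q = (\<lambda>h. Re (cinner h (Q h)))"
  have qeq: "q h = (\<Sum>\<alpha>\<in>MI. c \<alpha> * (norm (A \<alpha> h))\<^sup>2)" for h
    by (simp add: q_def QQ Re_sum cinner_self_norm)
  have c0: "c \<alpha> \<ge> 0" for \<alpha> unfolding c_def by (intro divide_nonneg_nonneg prod_nonneg) auto
  have qnn: "q h \<ge> 0" for h unfolding qeq by (intro sum_nonneg mult_nonneg_nonneg c0) auto
  have qscale: "q (r *\<^sub>R h) = r\<^sup>2 * q h" for r h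
    unfolding qeq using blA by (simp add: bl_scaleR sum_distrib_left power_mult_distrib mult_ac)
  define s where "s = (\<Sum>\<alpha>\<in>MI. c \<alpha> * (cmod (\<mu> \<alpha>))\<^sup>2)"
  have nlim: "(\<lambda>n. norm (A \<alpha> (hs n))) \<longlonglongrightarrow> cmod (\<mu> \<alpha>)" for \<alpha>
  proof -
    have t0: "(\<lambda>n. norm (A \<alpha> (hs n) - \<mu> \<alpha> *\<^sub>C hs n)) \<longlonglongrightarrow> 0"
      using tA[of \<alpha>] by (simp add: tendsto_norm_zero_iff)
    have "(\<lambda>n. norm (A \<alpha> (hs n)) - cmod (\<mu> \<alpha>)) \<longlonglongrightarrow> 0"
    proof (rule Lim_null_comparison[OF _ t0], rule always_eventually, rule allI)
      fix n
      have "cmod (\<mu> \<alpha>) = norm (\<mu> \<alpha> *\<^sub>C hs n)" by (simp add: norm_scaleC unit)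
      thus "norm (norm (A \<alpha> (hs n)) - cmod (\<mu> \<alpha>)) \<le> norm (A \<alpha> (hs n) - \<mu> \<alpha> *\<^sub>C hs n)"
        using norm_triangle_ineq3[of "A \<alpha> (hs n)" "\<mu> \<alpha> *\<^sub>C hs n"] by simp
    qed
    thus ?thesis by (simp add: LIM_zero_iff)
  qed
  have lim: "(\<lambda>n. q (hs n)) \<longlonglongrightarrow> s"
    unfolding qeq s_def by (intro tendsto_intros nlim)
  have s_eq: "s = (l2norm m z) ^ (2 * k)"
  proof -
    have "(cmod (\<mu> \<alpha>))\<^sup>2 = (\<Prod>i<m. ((cmod (z i))\<^sup>2) ^ \<alpha> i)" for \<alpha>
    proof -
      have "cmod (\<mu> \<alpha>) = (\<Prod>i<m. cmod (z i) ^ \<alpha> i)" by (simp add: \<mu>_def prod_norm[symmetric] norm_power)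
      hence "(cmod (\<mu> \<alpha>))\<^sup>2 = (\<Prod>i<m. (cmod (z i) ^ \<alpha> i)\<^sup>2)" by (simp add: prod_power_distrib)
      also have "\<dots> = (\<Prod>i<m. ((cmod (z i))\<^sup>2) ^ \<alpha> i)"
        by (rule prod.cong) (simp_all add: power_mult[symmetric] mult.commute)
      finally show ?thesis .
    qed
    hence "s = (\<Sum>i<m. (cmod (z i))\<^sup>2) ^ k"
      unfolding s_def MI_def c_def using multinomial[of k m "\<lambda>i. (cmod (z i))\<^sup>2"] by simp
    also have "(\<Sum>i<m. (cmod (z i))\<^sup>2) = (l2norm m z)\<^sup>2"
      by (simp add: l2norm_def sum_nonneg)
    finally show ?thesis by (simp add: power_mult)
  qed
  define U where "U = {h::'a. norm h = 1}"
  have hU: "hs 0 \<in> U" by (simp add: U_def unit)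
  have bddq: "bdd_below (q ` U)" by (rule bdd_belowI[of _ 0]) (auto simp: qnn)
  define c0 where "c0 = Inf (q ` U)"
  have c0s: "c0 \<le> s"
  proof (rule LIMSEQ_le_const[OF lim], intro exI allI impI)
    fix n show "c0 \<le> q (hs n)" unfolding c0_def by (rule cInf_lower) (use bddq unit in \<open>auto simp: U_def\<close>)
  qed
  have c0nn: "0 \<le> c0" unfolding c0_def using hU by (intro cInf_greatest) (auto simp: qnn)
  have qlow: "c0 * (norm g)\<^sup>2 \<le> q g" for g
  proof (cases "g = 0")
    case True
    have "q g = 0" using qscale[of 0 g] True by simp
    thus ?thesis using True by simp
  next
    case False
    define u where "u = (1 / norm g) *\<^sub>R g"
    have uU: "u \<in> U" using False by (simp add: U_def u_def)
    have gu: "g = norm g *\<^sub>R u" using False by (simp add: u_def)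
    have "c0 \<le> q u" unfolding c0_def by (rule cInf_lower) (use uU bddq in auto)
    hence "c0 * (norm g)\<^sup>2 \<le> q u * (norm g)\<^sup>2" by (simp add: mult_right_mono)
    also have "\<dots> = q g" by (subst gu, subst qscale) simp
    finally show ?thesis .
  qed
  obtain K where K: "\<And>x. norm (Q x) \<le> norm x * K" and K0: "K > 0"
    using bounded_linear.pos_bounded[OF blQ] by blast
  have approx: "\<exists>u\<in>U. norm (Q u) < c0 + e" if e: "e > 0" for e
  proof -
    define \<delta> where "\<delta> = e\<^sup>2 / K"
    have \<delta>0: "\<delta> > 0" using e K0 by (simp add: \<delta>_def)
    have "Inf (q ` U) < c0 + \<delta>" using \<delta>0 by (simp add: c0_def)
    then obtain u where uU: "u \<in> U" and qu: "q u < c0 + \<delta>"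
      using cInf_less_iff[of "q ` U"] hU bddq by auto
    have nu: "norm u = 1" using uU by (simp add: U_def)
    define v where "v = Q u - c0 *\<^sub>R u"
    define b where "b = (\<lambda>x y. Re (cinner x (Q y)) - c0 * Re (cinner x y))"
    have bnn: "b x x \<ge> 0" for x using qlow[of x] by (simp add: b_def q_def Re_cinner_self)
    have buv: "b u v = (norm v)\<^sup>2"
    proof -
      have "b u v = Re (cinner (Q u) v) - c0 * Re (cinner u v)" by (simp add: b_def sa)
      also have "\<dots> = Re (cinner v v)" by (simp add: v_def cinner_diff_left cinner_scaleR_left)
      finally show ?thesis by (simp add: Re_cinner_self)
    qed
    have bvu: "b v u = (norm v)\<^sup>2"
    proof -
      have "b v u = Re (cinner v v)" by (simp add: b_def v_def cinner_diff_right cinner_scaleR_right)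
      thus ?thesis by (simp add: Re_cinner_self)
    qed
    have exp: "b (u - t *\<^sub>R v) (u - t *\<^sub>R v) = b u u - t * b u v - t * b v u + t\<^sup>2 * b v v" for t
      using blQ by (simp add: b_def bl_diff bl_scaleR cinner_diff_left cinner_diff_right
          cinner_scaleR_left cinner_scaleR_right algebra_simps power2_eq_square)
    have bvv: "b v v \<le> K * (norm v)\<^sup>2"
    proof -
      have "b v v \<le> Re (cinner v (Q v))" using c0nn by (simp add: b_def Re_cinner_self)
      also have "\<dots> \<le> norm v * norm (Q v)" by (rule Re_cinner_le)
      also have "\<dots> \<le> norm v * (norm v * K)" using K by (simp add: mult_left_mono)
      finally show ?thesis by (simp add: power2_eq_square mult_ac)
    qed
    have "0 \<le> b u u - 2 * (1/K) * (norm v)\<^sup>2 + (1/K)\<^sup>2 * b v v"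
      using bnn[of "u - (1/K) *\<^sub>R v"] unfolding exp buv bvu by simp
    also have "(1/K)\<^sup>2 * b v v \<le> (1/K)\<^sup>2 * (K * (norm v)\<^sup>2)" using bvv by (simp add: mult_left_mono)
    also have "(1/K)\<^sup>2 * (K * (norm v)\<^sup>2) = (1/K) * (norm v)\<^sup>2" using K0 by (simp add: power2_eq_square)
    finally have "(1/K) * (norm v)\<^sup>2 \<le> b u u" by simp
    hence "(norm v)\<^sup>2 \<le> K * b u u" using K0 by (simp add: field_simps)
    also have "b u u = q u - c0" using nu by (simp add: b_def q_def Re_cinner_self)
    also have "K * (q u - c0) < K * \<delta>" using qu K0 by simp
    also have "K * \<delta> = e\<^sup>2" using K0 by (simp add: \<delta>_def)
    finally have "norm v < e" using e by (simp add: power_less_imp_less_base)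
    have "Q u = v + c0 *\<^sub>R u" by (simp add: v_def)
    hence "norm (Q u) \<le> norm v + c0" using nu c0nn by (metis norm_triangle_ineq norm_scaleR abs_of_nonneg mult.right_neutral)
    thus ?thesis using \<open>norm v < e\<close> uU by (intro bexI[of _ u]) auto
  qed
  have l0: "0 \<le> l2norm m z" by (simp add: l2norm_def sum_nonneg)
  have kpos: "0 < 2 * real k" using k by simp
  have bddf: "bdd_below ((\<lambda>h. norm (Q h) powr (1 / (2 * real k))) ` U)"
    by (rule bdd_belowI[of _ 0]) auto
  show ?thesis
  proof (rule dense_ge)
    fix y assume y: "l2norm m z < y"
    have y0: "0 < y" using y l0 by linarith
    have "l2norm m z ^ (2 * k) < y ^ (2 * k)" using y l0 k by (intro power_strict_mono) auto
    hence "s < y ^ (2 * k)" using s_eq by simp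
    then obtain u where uU: "u \<in> U" and Qu: "norm (Q u) < c0 + (y ^ (2 * k) - s)"
      using approx[of "y ^ (2 * k) - s"] by auto
    have Qu': "norm (Q u) \<le> y ^ (2 * k)" using Qu c0s by simp
    have "(INF h\<in>U. norm (Q h) powr (1 / (2 * real k))) \<le> norm (Q u) powr (1 / (2 * real k))"
      by (rule cINF_lower[OF bddf uU])
    also have "\<dots> \<le> (y ^ (2 * k)) powr (1 / (2 * real k))"
      using Qu' kpos by (intro powr_mono2) auto
    also have "(y ^ (2 * k)) = y powr (real (2 * k))" using powr_realpow[OF y0, of "2 * k"] by simp
    also have "(y powr (real (2 * k))) powr (1 / (2 * real k)) = y"
      using kpos y0 by (simp add: powr_powr)
    finally show "(INF h\<in>{h. norm h = 1}. norm (QTk m T k h) powr (1 / (2 * real k))) \<le> y"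
      by (simp add: U_def Q_def)
  qed
qed



theorem lemma3p6:
  fixes T :: "nat \<Rightarrow> 'a::chilbert \<Rightarrow> 'a" and m :: nat
  assumes "\<forall>i<m. bounded_clinear (T i)"
    and "\<forall>i<m. \<forall>j<m. T i \<circ> T j = T j \<circ> T i"
  shows "joint_ap_spectrum m T \<inter> {z\<in>cvec m. l2norm m z < m_infty m T} = {}"
proof (rule equals0I)
  fix z assume "z \<in> joint_ap_spectrum m T \<inter> {z\<in>cvec m. l2norm m z < m_infty m T}"
  then obtain hs :: "nat \<Rightarrow> 'a" where unit: "\<And>n. norm (hs n) = 1"
    and lim: "(\<lambda>n. \<Sum>j<m. norm (T j (hs n) - z j *\<^sub>C hs n)) \<longlonglongrightarrow> 0"
    and lt: "l2norm m z < m_infty m T"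
    by (auto simp: joint_ap_spectrum_def)
  have good: "good hs (T i) (z i)" if i: "i < m" for i
  proof -
    have bc: "bounded_clinear (T i)" using assms(1) i by blast
    have "(\<lambda>n. T i (hs n) - z i *\<^sub>C hs n) \<longlonglongrightarrow> 0"
    proof (rule Lim_null_comparison[OF _ lim], rule always_eventually, rule allI)
      fix n
      show "norm (T i (hs n) - z i *\<^sub>C hs n) \<le> (\<Sum>j<m. norm (T j (hs n) - z j *\<^sub>C hs n))"
        using i by (intro member_le_sum[of i "{..<m}" "\<lambda>j. norm (T j (hs n) - z j *\<^sub>C hs n)"]) auto
    qed
    thus ?thesis using bc by (simp add: good_def bounded_clinear_def)
  qed
  have "m_infty m T \<le> l2norm m z"
    unfolding m_infty_def
  proof (rule cSUP_least)
    show "{1::nat..} \<noteq> {}" by auto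
  next
    fix k :: nat assume "k \<in> {1..}"
    thus "(INF h\<in>{h. norm h = 1}. norm (QTk m T k h) powr (1 / (2 * real k))) \<le> l2norm m z"
      by (intro key[OF good unit]) auto
  qed
  with lt show False by simp
qed


end
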